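(* Let $0<\mu<L_{\max}^{-1}$ with $L_{\max}=\max_i\|A_i\|_2^2$, let $\{x^n\}$ be generated by GAITA (as in the context) from an arbitrary $x^0\in\mathbf{R}^N$, and let $\mathcal{L}$ be the set of limit points of $\{x^n\}$. Then $\mathcal{L}\subseteq\mathcal{F}_q$.
   Context: Let $A\in\mathbf{R}^{m\times N}$ have columns $A_1,\dots,A_N$, $y\in\mathbf{R}^m$, $\lambda>0$, $q\in(0,1)$, and $T_\lambda(x)=\frac12\|Ax-y\|_2^2+\lambda\sum_{i=1}^N|x_i|^q$. For a step size $\mu>0$ set $\tau_{\mu,q}=\frac{2-q}{2-2q}(2\lambda\mu(1-q))^{\frac{1}{2-q}}$ and $\eta_{\mu,q}=(2\lambda\mu(1-q))^{\frac{1}{2-q}}$. For $z\in\mathbf{R}$ let $prox_{\mu,\lambda|\cdot|^q}(z)=\arg\min_{v\in\mathbf{R}}\{\frac{(z-v)^2}{2\mu}+\lambda|v|^q\}$ (a set; a single point when $|z|\neq\tau_{\mu,q}$). Define $\mathcal{T}(z,w)$ as the unique element of $prox_{\mu,\lambda|\cdot|^q}(z)$ if $|z|\neq\tau_{\mu,q}$, and, if $|z|=\tau_{\mu,q}$, as $sgn(z)\eta_{\mu,q}$ when $w\neq0$ and $0$ when $w=0$ ($sgn(0)=0$). GAITA: given $x^0\in\mathbf{R}^N$, for $n=0,1,2,\dots$ let $i=(n\bmod N)+1$, $z_i^n=x_i^n-\mu A_i^T(Ax^n-y)$, $x_i^{n+1}=\mathcal{T}(z_i^n,x_i^n)$, $x_j^{n+1}=x_j^n$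 for $j\neq i$. The fixed point set is $\mathcal{F}_q=\{x\in\mathbf{R}^N: x_i\in prox_{\mu,\lambda|\cdot|^q}(x_i-\mu A_i^T(Ax-y))\text{ for all }i=1,\dots,N\}$, i.e. the fixed points of the thresholding map $x\mapsto Prox_{\mu,\lambda\|\cdot\|_q^q}(x-\mu A^T(Ax-y))$ applied componentwise. *)

theory Defs
  imports "HOL-Analysis.Analysis"
begin

text \<open>Indices are 0-based: rows 0..m-1, columns 0..N-1. A matrix is A i j (row i, column j).
  Vectors are functions nat => real, only components below the dimension matter.\<close>

definition resid :: "nat \<Rightarrow> nat \<Rightarrow> (nat \<Rightarrow> nat \<Rightarrow> real) \<Rightarrow> (nat \<Rightarrow> real) \<Rightarrow> (nat \<Rightarrow> real) \<Rightarrow> nat \<Rightarrow> real" where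
  "resid m N A y x k = (\<Sum>j<N. A k j * x j) - y k"

definition grad_i :: "nat \<Rightarrow> nat \<Rightarrow> (nat \<Rightarrow> nat \<Rightarrow> real) \<Rightarrow> (nat \<Rightarrow> real) \<Rightarrow> (nat \<Rightarrow> real) \<Rightarrow> nat \<Rightarrow> real" where
  "grad_i m N A y x i = (\<Sum>k<m. A k i * resid m N A y x k)"

definition col_norm2 :: "nat \<Rightarrow> (nat \<Rightarrow> nat \<Rightarrow> real) \<Rightarrow> nat \<Rightarrow> real" where
  "col_norm2 m A i = (\<Sum>k<m. (A k i)^2)"

definition Lmax :: "nat \<Rightarrow> nat \<Rightarrow> (nat \<Rightarrow> nat \<Rightarrow> real) \<Rightarrow> real" where
  "Lmax m N A = Max ((\<lambda>i. col_norm2 m A i) ` {..<N})"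

definition prox_q :: "real \<Rightarrow> real \<Rightarrow> real \<Rightarrow> real \<Rightarrow> real set" where
  "prox_q \<mu> lam q z = {v. \<forall>u. (z - v)^2 / (2*\<mu>) + lam * \<bar>v\<bar> powr q \<le> (z - u)^2 / (2*\<mu>) + lam * \<bar>u\<bar> powr q}"

definition tau_q :: "real \<Rightarrow> real \<Rightarrow> real \<Rightarrow> real" where
  "tau_q \<mu> lam q = (2 - q) / (2 - 2*q) * (2*lam*\<mu>*(1 - q)) powr (1 / (2 - q))"

definition eta_q :: "real \<Rightarrow> real \<Rightarrow> real \<Rightarrow> real" where
  "eta_q \<mu> lam q = (2*lam*\<mu>*(1 - q)) powr (1 / (2 - q))"

definition Tmap :: "real \<Rightarrow> real \<Rightarrow> real \<Rightarrow> real \<Rightarrow> real \<Rightarrow> real" where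
  "Tmap \<mu> lam q z w =
     (if \<bar>z\<bar> \<noteq> tau_q \<mu> lam q then (THE v. v \<in> prox_q \<mu> lam q z)
      else if w \<noteq> 0 then sgn z * eta_q \<mu> lam q else 0)"

definition gaita_step :: "nat \<Rightarrow> nat \<Rightarrow> (nat \<Rightarrow> nat \<Rightarrow> real) \<Rightarrow> (nat \<Rightarrow> real) \<Rightarrow> real \<Rightarrow> real \<Rightarrow> real \<Rightarrow> nat \<Rightarrow> (nat \<Rightarrow> real) \<Rightarrow> (nat \<Rightarrow> real)" where
  "gaita_step m N A y lam q \<mu> n x =
     (let i = n mod N; z = x i - \<mu> * grad_i m N A y x i in x(i := Tmap \<mu> lam q z (x i)))"

primrec gaita :: "nat \<Rightarrow> nat \<Rightarrow> (nat \<Rightarrow> nat \<Rightarrow> real) \<Rightarrow> (nat \<Rightarrow> real) \<Rightarrow> real \<Rightarrow> real \<Rightarrow> real \<Rightarrow> (nat \<Rightarrow> real) \<Rightarrow> nat \<Rightarrow> (nat \<Rightarrow> real)" where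
  "gaita m N A y lam q \<mu> x0 0 = x0"
| "gaita m N A y lam q \<mu> x0 (Suc n) = gaita_step m N A y lam q \<mu> n (gaita m N A y lam q \<mu> x0 n)"

definition fixed_set :: "nat \<Rightarrow> nat \<Rightarrow> (nat \<Rightarrow> nat \<Rightarrow> real) \<Rightarrow> (nat \<Rightarrow> real) \<Rightarrow> real \<Rightarrow> real \<Rightarrow> real \<Rightarrow> (nat \<Rightarrow> real) set" where
  "fixed_set m N A y lam q \<mu> = {x. \<forall>i<N. x i \<in> prox_q \<mu> lam q (x i - \<mu> * grad_i m N A y x i)}"

text \<open>Limit points of a sequence of vectors in R^N (components 0..N-1), with the
  limit vector zero outside the index range.\<close>
definition limit_points :: "nat \<Rightarrow> (nat \<Rightarrow> nat \<Rightarrow> real) \<Rightarrow> (nat \<Rightarrow> real) set" where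
  "limit_points N xs = {x. (\<forall>j\<ge>N. x j = 0) \<and>
      (\<exists>r. strict_mono r \<and> (\<forall>j<N. (\<lambda>k. xs (r k) j) \<longlonglongrightarrow> x j))}"

end

theory Submission
  imports Defs
begin


definition Pq :: "real \<Rightarrow> real \<Rightarrow> real \<Rightarrow> real \<Rightarrow> real \<Rightarrow> real" where
  "Pq \<mu> lam q z v = (z - v)^2 / (2*\<mu>) + lam * \<bar>v\<bar> powr q"

lemma prox_alt: "v \<in> prox_q \<mu> lam q z \<longleftrightarrow> (\<forall>u. Pq \<mu> lam q z v \<le> Pq \<mu> lam q z u)"
  by (simp add: prox_q_def Pq_def)

lemma bern_neg:
  fixes s r :: real assumes "s > 0" "r < 0"
  shows "s powr r \<ge> 1 + r * (s - 1)"
proof -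
  have "s powr r = exp (r * ln s)" using assms by (simp add: powr_def)
  also have "\<dots> \<ge> 1 + r * ln s" by (rule exp_ge_add_one_self)
  moreover have "r * ln s \<ge> r * (s - 1)"
    using ln_le_minus_one[OF assms(1)] assms(2) by (simp add: mult_left_mono_neg)
  ultimately show ?thesis by linarith
qed

lemma powr_plus1: "(x::real) > 0 \<Longrightarrow> x powr (a + 1) = x powr a * x"
  by (simp add: powr_add)

locale pq =
  fixes \<mu> lam q :: real
  assumes mu: "\<mu> > 0" and lam: "lam > 0" and q0: "0 < q" and q1: "q < 1"
begin

abbreviation "P \<equiv> Pq \<mu> lam q"
abbreviation "\<eta> \<equiv> eta_q \<mu> lam q"
abbreviation "\<tau> \<equiv> tau_q \<mu> lam q"

lemma eta_pos: "\<eta> > 0"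
  using mu lam q1 by (simp add: eta_q_def)

lemma tau_eq: "\<tau> = (2 - q) / (2 - 2*q) * \<eta>"
  by (simp add: tau_q_def eta_q_def)

lemma tau_pos: "\<tau> > 0"
  using eta_pos q1 by (simp add: tau_eq)

lemma eta_pow: "\<eta> powr (2 - q) = 2*lam*\<mu>*(1-q)"
proof -
  have "\<eta> powr (2 - q) = (2*lam*\<mu>*(1-q)) powr (1/(2-q) * (2-q))"
    by (simp add: eta_q_def powr_powr)
  also have "\<dots> = 2*lam*\<mu>*(1-q)" using q1 mu lam by simp
  finally show ?thesis .
qed

lemma eta_pow2: "lam*\<mu> * \<eta> powr (q - 1) = \<eta> / (2*(1-q))"
proof -
  have "\<eta> powr (q - 1) = \<eta> powr (q - 2) * \<eta>"
    using eta_pos powr_plus1[of \<eta> "q-2"] by simp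
  also have "\<eta> powr (q - 2) = inverse (\<eta> powr (2 - q))"
    using eta_pos by (simp add: powr_minus[symmetric])
  finally show ?thesis using eta_pow mu lam q1 by (simp add: field_simps)
qed

lemma key_ineq:
  assumes "v > 0" shows "v/2 + lam*\<mu> * v powr (q - 1) \<ge> \<tau>"
proof -
  define s where "s = v / \<eta>"
  have s: "s > 0" using assms eta_pos by (simp add: s_def)
  have v: "v = \<eta> * s" using eta_pos by (simp add: s_def)
  have "v powr (q-1) = \<eta> powr (q-1) * s powr (q-1)"
    using v eta_pos s by (simp add: powr_mult)
  hence "lam*\<mu> * v powr (q - 1) = \<eta> / (2*(1-q)) * s powr (q-1)"
    using eta_pow2 by (metis mult.assoc)
  moreover have "s powr (q-1) \<ge> 1 + (q-1)*(s-1)" using bern_neg[OF s] q1 by simp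
  moreover have "\<eta> / (2*(1-q)) \<ge> 0" using eta_pos q1 by simp
  ultimately have "lam*\<mu> * v powr (q - 1) \<ge> \<eta> / (2*(1-q)) * (1 + (q-1)*(s-1))"
    by (metis mult_left_mono)
  also have "\<eta> / (2*(1-q)) * (1 + (q-1)*(s-1)) = \<eta> / (2*(1-q)) - \<eta>*(s-1)/2"
    using q1 by (simp add: field_simps)
  finally have "v/2 + lam*\<mu> * v powr (q - 1) \<ge> v/2 + \<eta> / (2*(1-q)) - \<eta>*(s-1)/2" by simp
  moreover have "v/2 + \<eta> / (2*(1-q)) - \<eta>*(s-1)/2 = \<tau>"
    using v q1 by (simp add: tau_eq field_simps)
  ultimately show ?thesis by simp
qed

lemma key_eq: "\<eta>/2 + lam*\<mu> * \<eta> powr (q - 1) = \<tau>"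
proof -
  have "\<eta>/2 + \<eta> / (2*(1-q)) = (2 - q) / (2 - 2*q) * \<eta>" using q1 by (simp add: field_simps)
  thus ?thesis using eta_pow2 by (simp add: tau_eq)
qed

lemma P_diff0:
  assumes "v > 0"
  shows "P z v - P z 0 = (v/\<mu>) * (v/2 + lam*\<mu> * v powr (q-1) - z)"
proof -
  have "v powr q = v powr (q-1) * v" using assms powr_plus1[of v "q-1"] by simp
  thus ?thesis using assms mu by (simp add: Pq_def field_simps power2_eq_square)
qed

lemma P_neg:
  assumes "z \<ge> 0" "v \<ge> 0" shows "P z v \<le> P z (-v)"
proof -
  have "(z - v)^2 \<le> (z + v)^2" using assms by (simp add: power2_eq_square algebra_simps)
  thus ?thesis using mu by (simp add: Pq_def divide_right_mono)
qed

lemma P_neg_strict: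
  assumes "z > 0" "v > 0" shows "P z v < P z (-v)"
proof -
  have "(z - v)^2 < (z + v)^2" using assms by (simp add: power2_eq_square algebra_simps)
  thus ?thesis using mu by (simp add: Pq_def divide_strict_right_mono)
qed

lemma prox_sym: "v \<in> prox_q \<mu> lam q z \<longleftrightarrow> -v \<in> prox_q \<mu> lam q (-z)"
proof -
  have e: "P (-z) (-u) = P z u" for u by (simp add: Pq_def power2_eq_square algebra_simps)
  show ?thesis unfolding prox_alt
    by (metis e minus_minus)
qed

lemma P_cont: "continuous_on S (P z)"
proof -
  have c: "continuous_on S (\<lambda>v. \<bar>v\<bar> powr q)"
    using q0 by (intro continuous_on_powr') (auto intro: continuous_intros)
  show ?thesis unfolding Pq_def using mu
    by (intro continuous_intros c) auto
qed

lemma P0: "P z 0 = z^2/(2*\<mu>)" by (simp add: Pq_def)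

lemma P_ge: "P z u \<ge> (z - u)^2/(2*\<mu>)" using lam by (simp add: Pq_def)

lemma prox_exists: "\<exists>v. \<forall>u. P z v \<le> P z u"
proof -
  define R where "R = 2*\<bar>z\<bar>"
  have "\<exists>x\<in>{-R..R}. \<forall>y\<in>{-R..R}. P z x \<le> P z y"
    by (rule continuous_attains_inf) (auto simp: R_def P_cont)
  then obtain x where x: "x \<in> {-R..R}" "\<And>y. y \<in> {-R..R} \<Longrightarrow> P z x \<le> P z y" by blast
  have "P z x \<le> P z u" for u
  proof (cases "u \<in> {-R..R}")
    case True thus ?thesis using x by blast
  next
    case False
    hence "\<bar>u\<bar> > 2*\<bar>z\<bar>" by (auto simp: R_def)
    hence "\<bar>z - u\<bar> > \<bar>z\<bar>" by linarith
    hence "(z-u)^2 > z^2" by (metis abs_ge_zero power2_abs power_strict_mono zero_less_numeral)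
    hence "z^2/(2*\<mu>) \<le> (z-u)^2/(2*\<mu>)" using mu by (simp add: divide_right_mono)
    moreover have "0 \<in> {-R..R}" by (simp add: R_def)
    ultimately show ?thesis using x(2)[of 0] P0[of z] P_ge[of z u] by linarith
  qed
  thus ?thesis by blast
qed

lemma prox_lt:
  assumes "0 \<le> z" "z < \<tau>" shows "v \<in> prox_q \<mu> lam q z \<longleftrightarrow> v = 0"
proof -
  have strict: "P z 0 < P z u" if "u \<noteq> 0" for u
  proof -
    have a: "P z 0 < P z \<bar>u\<bar>"
    proof -
      have "\<bar>u\<bar> > 0" using that by simp
      from P_diff0[OF this, of z] key_ineq[OF this] assms mu this
      have "P z \<bar>u\<bar> - P z 0 > 0" by (simp add: mult_pos_pos)
      thus ?thesis by simp
    qed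
    show ?thesis
    proof (cases "u \<ge> 0")
      case True thus ?thesis using a by simp
    next
      case False thus ?thesis using a P_neg[OF assms(1), of "-u"] by simp
    qed
  qed
  show ?thesis unfolding prox_alt
    using strict by (metis less_le not_less)
qed

lemma prox_tau:
  shows "0 \<in> prox_q \<mu> lam q \<tau>" and "\<eta> \<in> prox_q \<mu> lam q \<tau>"
proof -
  have ge: "P \<tau> 0 \<le> P \<tau> u" for u
  proof -
    have a: "P \<tau> 0 \<le> P \<tau> \<bar>u\<bar>"
    proof (cases "u = 0")
      case False
      hence "\<bar>u\<bar> > 0" by simp
      from P_diff0[OF this, of \<tau>] key_ineq[OF this] mu this
      have "P \<tau> \<bar>u\<bar> - P \<tau> 0 \<ge> 0" by (simp add: mult_nonneg_nonneg)
      thus ?thesis by simp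
    qed simp
    show ?thesis
    proof (cases "u \<ge> 0")
      case True thus ?thesis using a by simp
    next
      case False thus ?thesis using a P_neg[of \<tau> "-u"] tau_pos by simp
    qed
  qed
  have "P \<tau> \<eta> = P \<tau> 0" using P_diff0[OF eta_pos, of \<tau>] key_eq by simp
  thus "0 \<in> prox_q \<mu> lam q \<tau>" "\<eta> \<in> prox_q \<mu> lam q \<tau>" unfolding prox_alt using ge by auto
qed

lemma prox_gt_pos:
  assumes "z > \<tau>" "v \<in> prox_q \<mu> lam q z" shows "v > 0"
proof -
  have m: "P z v \<le> P z u" for u using assms(2) prox_alt by blast
  have "\<eta> * (\<tau> - z) < 0" using eta_pos assms(1) by (simp add: mult_pos_neg)
  hence "\<eta> * (\<tau> - z) / \<mu> < 0" using mu by (simp add: divide_neg_pos)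
  hence "P z \<eta> - P z 0 < 0"
    using P_diff0[OF eta_pos, of z] key_eq by simp
  hence "v \<noteq> 0" using m[of \<eta>] by auto
  moreover have "\<not> v < 0"
  proof
    assume "v < 0"
    hence "P z (-v) < P z (- (-v))" using P_neg_strict[of z "-v"] assms(1) tau_pos by simp
    thus False using m[of "-v"] by simp
  qed
  ultimately show ?thesis by linarith
qed

definition "h z v = (z - v)^2/(2*\<mu>) + lam * v powr q"
definition "h1 z v = (v - z)/\<mu> + lam*q* v powr (q-1)"
definition "h2 v = 1/\<mu> + lam*q*(q-1)* v powr (q-2)"

lemma h_P: "v > 0 \<Longrightarrow> P z v = h z v" by (simp add: Pq_def h_def)

lemma h_deriv: assumes "v > 0" shows "(h z has_real_derivative h1 z v) (at v)"
proof -
  have "((\<lambda>v. (z - v)*(z-v)/(2*\<mu>) + lam * v powr q) has_real_derivative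
      ((0-1)*(z-v) + (0-1)*(z-v))/(2*\<mu>) + lam * (q * v powr (q - 1))) (at v)"
    by (intro DERIV_add DERIV_cmult has_real_derivative_powr assms DERIV_cdivide DERIV_mult DERIV_diff DERIV_const DERIV_ident)
  moreover have "((0-1)*(z-v) + (0-1)*(z-v))/(2*\<mu>) = (v - z)/\<mu>" using mu by (auto simp: field_simps)
  ultimately show ?thesis unfolding h_def h1_def by (simp add: power2_eq_square mult.assoc)
qed

lemma h1_deriv: assumes "v > 0" shows "(h1 z has_real_derivative h2 v) (at v)"
proof -
  have "((\<lambda>v. (v - z)/\<mu> + (lam*q) * v powr (q-1)) has_real_derivative
      (1 - 0)/\<mu> + (lam*q) * ((q-1) * v powr (q - 1 - 1))) (at v)"
    by (intro DERIV_add DERIV_cmult has_real_derivative_powr assms DERIV_cdivide DERIV_diff DERIV_const DERIV_ident)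
  moreover have "q - 1 - 1 = q - 2" by simp
  ultimately show ?thesis unfolding h1_def h2_def by (simp add: mult.assoc)
qed

lemma fermat:
  assumes "a > 0" "\<And>u. P z a \<le> P z u" shows "h1 z a = 0"
proof (rule DERIV_local_min[OF h_deriv[OF assms(1)] assms(1)], intro allI impI)
  fix y assume "\<bar>a - y\<bar> < a"
  hence y: "y > 0" by linarith
  show "h z a \<le> h z y" using assms(2)[of y] h_P[OF assms(1)] h_P[OF y] by simp
qed

lemma no_two_min:
  assumes "0 < a" "a < b" "\<And>u. P z a \<le> P z u" "\<And>u. P z b \<le> P z u"
  shows False
proof -
  have b0: "b > 0" using assms(1,2) by linarith
  have ha: "h1 z a = 0" using fermat[OF assms(1) assms(3)] .
  have hb: "h1 z b = 0" using fermat[OF b0 assms(4)] .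
  have "P z a = P z b" using assms(3)[of b] assms(4)[of a] by simp
  hence eq: "h z a = h z b" using h_P[OF assms(1)] h_P[OF b0] by simp
  have D: "\<And>x. a \<le> x \<Longrightarrow> x \<le> b \<Longrightarrow> (h z has_real_derivative h1 z x) (at x)"
    by (rule h_deriv) (use assms(1) in linarith)
  obtain c where c: "a < c" "c < b" "h z b - h z a = (b - a) * h1 z c"
    using MVT2[OF assms(2) D] by blast
  have hc: "h1 z c = 0" using c eq assms(2) by simp
  have D1: "\<And>x. a \<le> x \<Longrightarrow> x \<le> c \<Longrightarrow> (h1 z has_real_derivative h2 x) (at x)"
    by (rule h1_deriv) (use assms(1) in linarith)
  obtain d1 where d1: "a < d1" "d1 < c" "h1 z c - h1 z a = (c - a) * h2 d1"
    using MVT2[OF c(1) D1] by blast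
  have D2: "\<And>x. c \<le> x \<Longrightarrow> x \<le> b \<Longrightarrow> (h1 z has_real_derivative h2 x) (at x)"
    by (rule h1_deriv) (use assms(1) c(1) in linarith)
  obtain d2 where d2: "c < d2" "d2 < b" "h1 z b - h1 z c = (b - c) * h2 d2"
    using MVT2[OF c(2) D2] by blast
  have "h2 d1 = 0" using d1 ha hc by simp
  moreover have "h2 d2 = 0" using d2 hb hc by simp
  ultimately have "(lam*q*(q-1)) * d1 powr (q-2) = (lam*q*(q-1)) * d2 powr (q-2)"
    unfolding h2_def by linarith
  moreover have "lam*q*(q-1) \<noteq> 0" using lam q0 q1 by simp
  ultimately have "d1 powr (q-2) = d2 powr (q-2)" by simp
  moreover have "d2 powr (q-2) < d1 powr (q-2)"
    by (rule powr_less_mono2_neg) (use q1 d1 d2 c assms(1) in linarith)+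
  ultimately show False by simp
qed

lemma prox_gt_unique:
  assumes "z > \<tau>" shows "\<exists>!v. v \<in> prox_q \<mu> lam q z"
proof -
  obtain v where "\<forall>u. P z v \<le> P z u" using prox_exists by blast
  hence v: "v \<in> prox_q \<mu> lam q z" by (simp add: prox_alt)
  have uq: "w = v" if w: "w \<in> prox_q \<mu> lam q z" for w
  proof (rule ccontr)
    assume ne: "w \<noteq> v"
    have pw: "w > 0" using prox_gt_pos[OF assms w] .
    have pv: "v > 0" using prox_gt_pos[OF assms v] .
    have mw: "\<And>u. P z w \<le> P z u" using w by (simp add: prox_alt)
    have mv: "\<And>u. P z v \<le> P z u" using v by (simp add: prox_alt)
    show False
    proof (cases "w < v")
      case True show False by (rule no_two_min[OF pw True mw mv])
    next
      case False hence "v < w" using ne by simp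
      show False by (rule no_two_min[OF pv \<open>v < w\<close> mv mw])
    qed
  qed
  show ?thesis using v uq by blast
qed

lemma prox_unique:
  assumes "\<bar>z\<bar> \<noteq> \<tau>" shows "\<exists>!v. v \<in> prox_q \<mu> lam q z"
proof -
  have pos: "\<exists>!v. v \<in> prox_q \<mu> lam q z" if "z \<ge> 0" "z \<noteq> \<tau>" for z
  proof (cases "z < \<tau>")
    case True
    show ?thesis by (rule ex1I[of _ 0]) (use prox_lt[OF that(1) True] in auto)
  next
    case False hence "z > \<tau>" using that by simp
    thus ?thesis by (rule prox_gt_unique)
  qed
  show ?thesis
  proof (cases "z \<ge> 0")
    case True thus ?thesis using pos assms by simp
  next
    case False
    hence "-z \<ge> 0" "-z \<noteq> \<tau>" using assms by auto
    from pos[OF this] obtain v where v: "v \<in> prox_q \<mu> lam q (-z)"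
      and vu: "\<And>w. w \<in> prox_q \<mu> lam q (-z) \<Longrightarrow> w = v" by auto
    show ?thesis
    proof (rule ex1I[of _ "-v"])
      show "-v \<in> prox_q \<mu> lam q z" using v prox_sym[of "-v" z] by simp
      fix w assume "w \<in> prox_q \<mu> lam q z"
      hence "-w \<in> prox_q \<mu> lam q (-z)" using prox_sym[of w z] by simp
      hence "-w = v" by (rule vu)
      thus "w = -v" by simp
    qed
  qed
qed

lemma Tmap_prox: "Tmap \<mu> lam q z w \<in> prox_q \<mu> lam q z"
proof (cases "\<bar>z\<bar> = \<tau>")
  case False
  have "(THE v. v \<in> prox_q \<mu> lam q z) \<in> prox_q \<mu> lam q z"
    by (rule theI'[OF prox_unique[OF False]])
  thus ?thesis using False by (simp add: Tmap_def)
next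
  case True
  have n0: "0 \<in> prox_q \<mu> lam q z"
  proof (cases "z \<ge> 0")
    case True
    with \<open>\<bar>z\<bar> = \<tau>\<close> have "z = \<tau>" by auto
    thus ?thesis using prox_tau(1) by simp
  next
    case False
    with \<open>\<bar>z\<bar> = \<tau>\<close> have "z = -\<tau>" by auto
    thus ?thesis using prox_tau(1) prox_sym[of 0 \<tau>] by simp
  qed
  have ne: "sgn z * \<eta> \<in> prox_q \<mu> lam q z"
  proof (cases "z \<ge> 0")
    case True
    with \<open>\<bar>z\<bar> = \<tau>\<close> tau_pos have "z = \<tau>" "sgn z = 1" by auto
    thus ?thesis using prox_tau(2) by simp
  next
    case False
    with \<open>\<bar>z\<bar> = \<tau>\<close> have "z = -\<tau>" "sgn z = -1" by auto
    thus ?thesis using prox_tau(2) prox_sym[of \<eta> \<tau>] by simp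
  qed
  show ?thesis using True n0 ne by (simp add: Tmap_def)
qed


end

lemma prox_closed:
  assumes z: "zs \<longlonglongrightarrow> z" and v: "vs \<longlonglongrightarrow> v" and p: "\<And>k. vs k \<in> prox_q \<mu> lam q (zs k)"
    and q0: "0 < q" and mu: "\<mu> \<noteq> 0"
  shows "v \<in> prox_q \<mu> lam q z"
  unfolding prox_alt
proof
  fix u
  have a: "(\<lambda>k. Pq \<mu> lam q (zs k) (vs k)) \<longlonglongrightarrow> Pq \<mu> lam q z v"
    unfolding Pq_def using q0 mu by (intro tendsto_intros z v) auto
  have b: "(\<lambda>k. Pq \<mu> lam q (zs k) u) \<longlonglongrightarrow> Pq \<mu> lam q z u"
    unfolding Pq_def using mu by (intro tendsto_intros z) auto
  show "Pq \<mu> lam q z v \<le> Pq \<mu> lam q z u"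
    by (rule tendsto_le[OF _ b a]) (use p prox_alt in auto)
qed

definition Fobj :: "nat \<Rightarrow> nat \<Rightarrow> (nat \<Rightarrow> nat \<Rightarrow> real) \<Rightarrow> (nat \<Rightarrow> real) \<Rightarrow> real \<Rightarrow> real \<Rightarrow> (nat \<Rightarrow> real) \<Rightarrow> real" where
  "Fobj m N A y lam q x = (\<Sum>k<m. (resid m N A y x k)^2) / 2 + lam * (\<Sum>j<N. \<bar>x j\<bar> powr q)"

lemma Fobj_nonneg: "lam \<ge> 0 \<Longrightarrow> Fobj m N A y lam q x \<ge> 0"
  unfolding Fobj_def by (intro add_nonneg_nonneg mult_nonneg_nonneg sum_nonneg divide_nonneg_pos) auto

lemma sum_if_eq: "(i::nat) < N \<Longrightarrow> (\<Sum>j<N. if j = i then c else (0::real)) = c"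
  using sum.delta[of "{..<N}" i "\<lambda>_. c"] by simp

lemma resid_upd:
  assumes "i < N"
  shows "resid m N A y (x(i:=v)) k = resid m N A y x k + A k i * (v - x i)"
proof -
  have "(\<Sum>j<N. A k j * (x(i:=v)) j) = (\<Sum>j<N. A k j * x j + (if j = i then A k i * (v - x i) else 0))"
    by (rule sum.cong) (auto simp: algebra_simps)
  also have "\<dots> = (\<Sum>j<N. A k j * x j) + (\<Sum>j<N. if j = i then A k i * (v - x i) else 0)"
    by (simp add: sum.distrib)
  also have "\<dots> = (\<Sum>j<N. A k j * x j) + A k i * (v - x i)"
    using assms sum.delta[of "{..<N}" i "\<lambda>_. _"] by simp
  finally show ?thesis by (simp add: resid_def)
qed

lemma sum_upd:
  fixes f :: "real \<Rightarrow> real" and i N :: nat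
  assumes "i < N"
  shows "(\<Sum>j<N. f ((x(i:=v)) j)) = (\<Sum>j<N. f (x j)) + (f v - f (x i))"
proof -
  have "(\<Sum>j<N. f ((x(i:=v)) j)) = (\<Sum>j<N. f (x j) + (if j = i then f v - f (x i) else 0))"
    by (rule sum.cong) auto
  also have "\<dots> = (\<Sum>j<N. f (x j)) + (\<Sum>j<N. if j = i then f v - f (x i) else 0)"
    by (simp add: sum.distrib)
  also have "\<dots> = (\<Sum>j<N. f (x j)) + (f v - f (x i))"
    by (simp only: sum_if_eq[OF assms])
  finally show ?thesis .
qed

lemma F_upd:
  assumes "i < N"
  shows "Fobj m N A y lam q (x(i:=v)) = Fobj m N A y lam q x + (v - x i) * grad_i m N A y x i
     + col_norm2 m A i * (v - x i)^2 / 2 + lam * (\<bar>v\<bar> powr q - \<bar>x i\<bar> powr q)"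
proof -
  let ?r = "resid m N A y x" and ?t = "v - x i"
  have "(\<Sum>k<m. (resid m N A y (x(i:=v)) k)^2) = (\<Sum>k<m. (?r k)^2 + 2 * ?t * (A k i * ?r k) + ?t^2 * (A k i)^2)"
    by (intro sum.cong refl, simp only: resid_upd[OF assms], simp add: power2_eq_square algebra_simps)
  also have "\<dots> = (\<Sum>k<m. (?r k)^2) + 2 * ?t * grad_i m N A y x i + ?t^2 * col_norm2 m A i"
    by (simp add: sum.distrib grad_i_def col_norm2_def sum_distrib_left)
  finally have e: "(\<Sum>k<m. (resid m N A y (x(i:=v)) k)^2) = (\<Sum>k<m. (?r k)^2) + 2 * ?t * grad_i m N A y x i + ?t^2 * col_norm2 m A i" .
  show ?thesis unfolding Fobj_def e sum_upd[OF assms, of "\<lambda>t. \<bar>t\<bar> powr q"]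
    by (simp add: field_simps)
qed

lemma descent:
  assumes "i < N" "\<mu> > 0"
    and "v \<in> prox_q \<mu> lam q (x i - \<mu> * grad_i m N A y x i)"
  shows "Fobj m N A y lam q (x(i:=v)) \<le> Fobj m N A y lam q x - (1/(2*\<mu>) - col_norm2 m A i / 2) * (v - x i)^2"
proof -
  let ?g = "grad_i m N A y x i"
  let ?z = "x i - \<mu> * ?g"
  have "Pq \<mu> lam q ?z v \<le> Pq \<mu> lam q ?z (x i)" using assms(3) prox_alt by blast
  moreover have "(?z - v)^2/(2*\<mu>) - (?z - x i)^2/(2*\<mu>) = (x i - v)^2/(2*\<mu>) + ?g * (v - x i)"
    using assms(2) by (simp add: field_simps power2_eq_square)
  ultimately have "(x i - v)^2/(2*\<mu>) + ?g * (v - x i) + lam * (\<bar>v\<bar> powr q - \<bar>x i\<bar> powr q) \<le> 0"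
    unfolding Pq_def by (simp add: algebra_simps)
  moreover have "(x i - v)^2 = (v - x i)^2" by (simp add: power2_commute)
  ultimately show ?thesis unfolding F_upd[OF assms(1)] by (simp add: algebra_simps)
qed

lemma gaita_Suc_eq:
  "gaita m N A y lam q \<mu> x0 (Suc n) = (gaita m N A y lam q \<mu> x0 n)(n mod N :=
     Tmap \<mu> lam q (gaita m N A y lam q \<mu> x0 n (n mod N) - \<mu> * grad_i m N A y (gaita m N A y lam q \<mu> x0 n) (n mod N))
       (gaita m N A y lam q \<mu> x0 n (n mod N)))"
  by (simp add: gaita_step_def Let_def)

lemma exists_shift:
  assumes "i < (N::nat)" shows "\<exists>p<N. (n + p) mod N = i"
proof -
  have N: "N > 0" using assms by simp
  define p where "p = (i + N - n mod N) mod N"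
  have "p < N" using N by (simp add: p_def)
  moreover have "(n + p) mod N = i"
  proof -
    have "(n + p) mod N = (n + (i + N - n mod N)) mod N"
      by (simp add: p_def mod_add_right_eq)
    also have "\<dots> = (n mod N + (i + N - n mod N)) mod N"
      by (rule mod_add_left_eq[symmetric])
    also have "n mod N + (i + N - n mod N) = i + N"
      using N mod_less_divisor[OF N, of n] by linarith
    finally show ?thesis using assms by simp
  qed
  ultimately show ?thesis by blast
qed


theorem theorem2:
  fixes m N :: nat and A :: "nat \<Rightarrow> nat \<Rightarrow> real" and y x0 :: "nat \<Rightarrow> real"
    and lam q \<mu> :: real
  assumes "N \<ge> 1"
    and "lam > 0" and "0 < q" and "q < 1"
    and "0 < \<mu>" and "\<mu> < 1 / Lmax m N A"
  shows "limit_points N (gaita m N A y lam q \<mu> x0) \<subseteq> fixed_set m N A y lam q \<mu>"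
proof
  interpret pq \<mu> lam q using assms by unfold_locales auto
  define X where "X = gaita m N A y lam q \<mu> x0"
  define L where "L = Lmax m N A"
  define F where "F = Fobj m N A y lam q"
  have Npos: "N > 0" using assms(1) by simp
  have Lpos: "L > 0"
  proof (rule ccontr)
    assume "\<not> L > 0"
    hence "1 / L \<le> 0" by simp
    thus False using assms(5,6) unfolding L_def by linarith
  qed
  have colL: "col_norm2 m A i \<le> L" if "i < N" for i
    unfolding L_def Lmax_def using that by (intro Max_ge) auto
  define \<delta> where "\<delta> = 1/(2*\<mu>) - L/2"
  have "\<mu> * L < 1" using assms(5,6) Lpos by (simp add: L_def field_simps)
  hence dpos: "\<delta> > 0" using assms(5) by (simp add: \<delta>_def field_simps)
  define d where "d n = X (Suc n) (n mod N) - X n (n mod N)" for n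
  have imod: "n mod N < N" for n using Npos by simp
  have step: "X (Suc n) = (X n)(n mod N := X (Suc n) (n mod N))" for n
    unfolding X_def gaita_Suc_eq by simp
  have inprox: "X (Suc n) (n mod N) \<in> prox_q \<mu> lam q (X n (n mod N) - \<mu> * grad_i m N A y (X n) (n mod N))" for n
    unfolding X_def gaita_Suc_eq by (simp add: Tmap_prox)
  have dec: "F (X (Suc n)) \<le> F (X n) - \<delta> * (d n)^2" for n
  proof -
    have "F (X (Suc n)) \<le> F (X n) - (1/(2*\<mu>) - col_norm2 m A (n mod N) / 2) * (d n)^2"
      using descent[OF imod assms(5) inprox[of n]] step[of n] by (simp add: F_def d_def)
    moreover have "\<delta> * (d n)^2 \<le> (1/(2*\<mu>) - col_norm2 m A (n mod N) / 2) * (d n)^2"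
      using colL[OF imod[of n]] by (intro mult_right_mono) (auto simp: \<delta>_def)
    ultimately show ?thesis by linarith
  qed
  have sumb: "F (X n) + \<delta> * (\<Sum>l<n. (d l)^2) \<le> F (X 0)" for n
  proof (induction n)
    case 0 show ?case by simp
  next
    case (Suc n) thus ?case using dec[of n] by (simp add: algebra_simps)
  qed
  have Fnn: "F x \<ge> 0" for x using assms(2) Fobj_nonneg by (simp add: F_def)
  have "(\<Sum>l<n. (d l)^2) \<le> F (X 0) / \<delta>" for n
  proof -
    have "\<delta> * (\<Sum>l<n. (d l)^2) \<le> F (X 0)" using sumb[of n] Fnn[of "X n"] by linarith
    thus ?thesis using dpos by (simp add: field_simps)
  qed
  hence "summable (\<lambda>l. (d l)^2)" by (intro summableI_nonneg_bounded) auto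
  hence "(\<lambda>l. (d l)^2) \<longlonglongrightarrow> 0" by (rule summable_LIMSEQ_zero)
  hence "(\<lambda>l. sqrt ((d l)^2)) \<longlonglongrightarrow> sqrt 0" by (rule tendsto_real_sqrt)
  hence ad: "(\<lambda>l. \<bar>d l\<bar>) \<longlonglongrightarrow> 0" by simp
  have move: "\<bar>X (Suc n) j - X n j\<bar> \<le> \<bar>d n\<bar>" for n j
  proof (cases "j = n mod N")
    case True thus ?thesis by (simp add: d_def)
  next
    case False
    hence "X (Suc n) j = X n j" by (subst step) simp
    thus ?thesis by simp
  qed
  have movep: "\<bar>X (n + p) j - X n j\<bar> \<le> (\<Sum>l<p. \<bar>d (n+l)\<bar>)" for n p j
  proof (induction p)
    case 0 show ?case by simp
  next
    case (Suc p)
    have "\<bar>X (n + Suc p) j - X n j\<bar> \<le> \<bar>X (Suc (n + p)) j - X (n+p) j\<bar> + \<bar>X (n + p) j - X n j\<bar>"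
      by simp
    thus ?case using Suc move[of "n+p" j] by simp
  qed
  define E where "E n = (\<Sum>l<N. \<bar>d (n+l)\<bar>)" for n
  have E0: "E \<longlonglongrightarrow> 0"
  proof -
    have "(\<lambda>n. \<Sum>l<N. \<bar>d (n+l)\<bar>) \<longlonglongrightarrow> (\<Sum>l<N. 0)"
      by (intro tendsto_sum LIMSEQ_ignore_initial_segment[OF ad])
    thus ?thesis by (simp add: E_def[abs_def])
  qed
  have moveE: "\<bar>X (n + p) j - X n j\<bar> \<le> E n" if "p \<le> N" for n p j
  proof -
    have "(\<Sum>l<p. \<bar>d (n+l)\<bar>) \<le> E n"
      unfolding E_def using that by (intro sum_mono2) auto
    thus ?thesis using movep[of n p j] by linarith
  qed
  fix xs assume "xs \<in> limit_points N (gaita m N A y lam q \<mu> x0)"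
  then obtain r where r: "strict_mono r" and conv: "\<And>j. j < N \<Longrightarrow> (\<lambda>k. X (r k) j) \<longlonglongrightarrow> xs j"
    unfolding limit_points_def X_def by blast
  have ER: "(\<lambda>k. E (r k)) \<longlonglongrightarrow> 0" using LIMSEQ_subseq_LIMSEQ[OF E0 r] by (simp add: o_def)
  show "xs \<in> fixed_set m N A y lam q \<mu>"
    unfolding fixed_set_def
  proof (intro CollectI allI impI)
    fix i assume i: "i < N"
    have "\<forall>k. \<exists>p. p < N \<and> (r k + p) mod N = i" using exists_shift[OF i] by blast
    then obtain p where p: "\<And>k. p k < N" "\<And>k. (r k + p k) mod N = i" using choice by metis
    define n where "n k = r k + p k" for k
    have cshift: "(\<lambda>k. X (r k + s k) j) \<longlonglongrightarrow> xs j" if "j < N" "\<And>k. s k \<le> N" for j s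
    proof -
      have "(\<lambda>k. X (r k + s k) j - X (r k) j) \<longlonglongrightarrow> 0"
        by (rule Lim_null_comparison[OF _ ER]) (use moveE that(2) in auto)
      from tendsto_add[OF this conv[OF that(1)]] show ?thesis by simp
    qed
    have c1: "(\<lambda>k. X (n k) j) \<longlonglongrightarrow> xs j" if "j < N" for j
      unfolding n_def using cshift[OF that, of p] p(1) less_imp_le by blast
    have c2: "(\<lambda>k. X (Suc (n k)) j) \<longlonglongrightarrow> xs j" if "j < N" for j
    proof -
      have "(\<lambda>k. X (r k + (p k + 1)) j) \<longlonglongrightarrow> xs j"
        using cshift[OF that, of "\<lambda>k. p k + 1"] p(1) by (simp add: Suc_leI)
      thus ?thesis by (simp add: n_def)
    qed
    have c1': "(\<lambda>k. X (n k) j) \<longlonglongrightarrow> xs j" if "j \<in> {..<N}" for j using c1 that by simp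
    have zc: "(\<lambda>k. X (n k) i - \<mu> * grad_i m N A y (X (n k)) i) \<longlonglongrightarrow> xs i - \<mu> * grad_i m N A y xs i"
      unfolding grad_i_def resid_def
      by (intro tendsto_intros c1 i c1')
    have nm: "n k mod N = i" for k using p(2) by (simp add: n_def)
    have vin: "X (Suc (n k)) i \<in> prox_q \<mu> lam q (X (n k) i - \<mu> * grad_i m N A y (X (n k)) i)" for k
      using inprox[of "n k"] nm[of k] by simp
    show "xs i \<in> prox_q \<mu> lam q (xs i - \<mu> * grad_i m N A y xs i)"
      by (rule prox_closed[OF zc c2[OF i] vin assms(3)]) (use assms(5) in simp)
  qed
qed

end
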